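(* Let $x$ be an element of a commutative ring $R$ and $U$ a variable. The maps $f_0:R[U^{-1}]\to R$, $\sum_{i=0}^nr_iU^{-i}\mapsto r_0$, and $f_1:R[U^{-1}]\to R_x$, $f(U^{-1})\mapsto f(x^{-1})/x$, define a morphism of complexes from $K^\bullet(x-U;R[U^{-1}]):0\to R[U^{-1}]\xrightarrow{x-U}R[U^{-1}]\to0$ to $\check{C}_x:0\to R\xrightarrow{\iota_x}R_x\to0$, and this morphism is a quasi-isomorphism.
   Context: $R[U^{-1}]$ is the module of inverse polynomials: the free $R$-module with basis $U^{-i}$, $i\ge0$, which is an $R[U]$-module via $U^j\cdot U^{-i}=U^{j-i}$ if $j\le i$ and $=0$ if $j>i$. Both complexes are in cohomological degrees $0,1$; $\iota_x(r)=r/1$. *)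

theory Defs
  imports Main
begin

text \<open>An element sum r_i U^(-i) is represented by its coefficient function
  g :: nat => 'a, g i = r_i, with finite support.\<close>

definition inv_polys :: "(nat \<Rightarrow> 'a::zero) set" where
  "inv_polys = {g. finite {i. g i \<noteq> 0}}"

text \<open>Action of U: U * U^(-i) = U^(-(i-1)) for i >= 1 and U * U^0 = 0,
  so the coefficient of U^(-i) in U*g is the coefficient of U^(-(i+1)) in g.\<close>

definition U_act :: "(nat \<Rightarrow> 'a) \<Rightarrow> nat \<Rightarrow> 'a" where
  "U_act g = (\<lambda>i. g (Suc i))"

definition xU_mult :: "'a::comm_ring_1 \<Rightarrow> (nat \<Rightarrow> 'a) \<Rightarrow> nat \<Rightarrow> 'a" where
  "xU_mult x g = (\<lambda>i. x * g i - U_act g i)"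

text \<open>R_x = (R x nat)/~ where (a,m) represents a/x^m and
  (a,m) ~ (b,n) iff x^k (x^n a - x^m b) = 0 for some k.\<close>

definition locrel :: "'a::comm_ring_1 \<Rightarrow> (('a \<times> nat) \<times> ('a \<times> nat)) set" where
  "locrel x = {((a,m),(b,n)). \<exists>k. x ^ k * (x ^ n * a - x ^ m * b) = 0}"

definition loc_elem :: "'a::comm_ring_1 \<Rightarrow> 'a \<Rightarrow> nat \<Rightarrow> ('a \<times> nat) set" where
  "loc_elem x a m = locrel x `` {(a, m)}"

definition Loc :: "'a::comm_ring_1 \<Rightarrow> ('a \<times> nat) set set" where
  "Loc x = (UNIV :: ('a \<times> nat) set) // locrel x"

definition loc_add :: "'a::comm_ring_1 \<Rightarrow> ('a \<times> nat) set \<Rightarrow> ('a \<times> nat) set \<Rightarrow> ('a \<times> nat) set" where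
  "loc_add x A B = (\<Union>(a,m)\<in>A. \<Union>(b,n)\<in>B. loc_elem x (x ^ n * a + x ^ m * b) (m + n))"

definition loc_smul :: "'a::comm_ring_1 \<Rightarrow> 'a \<Rightarrow> ('a \<times> nat) set \<Rightarrow> ('a \<times> nat) set" where
  "loc_smul x r A = (\<Union>(a,m)\<in>A. loc_elem x (r * a) m)"

definition loc_iota :: "'a::comm_ring_1 \<Rightarrow> 'a \<Rightarrow> ('a \<times> nat) set" where
  "loc_iota x r = loc_elem x r 0"

definition inv_deg :: "(nat \<Rightarrow> 'a::zero) \<Rightarrow> nat" where
  "inv_deg g = (LEAST n. \<forall>i\<ge>n. g i = 0)"

definition f0_map :: "(nat \<Rightarrow> 'a) \<Rightarrow> 'a" where
  "f0_map g = g 0"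

text \<open>f1(g) = g(x^-1)/x = sum_{i<n} g_i x^(-(i+1)) = (sum_{i<n} g_i x^(n-(i+1))) / x^n.\<close>

definition f1_map :: "'a::comm_ring_1 \<Rightarrow> (nat \<Rightarrow> 'a) \<Rightarrow> ('a \<times> nat) set" where
  "f1_map x g = (let n = inv_deg g in loc_elem x (\<Sum>i<n. g i * x ^ (n - Suc i)) n)"

end

theory Submission
  imports Defs
begin

lemma locrel_iff: "((a,m),(b,n)) \<in> locrel x \<longleftrightarrow> (\<exists>k. x^k*(x^n*a - x^m*b) = 0)"
  by (simp add: locrel_def)

lemma locrel_equiv: "equiv UNIV (locrel x)"
proof -
  have "refl_on UNIV (locrel x)"
    by (auto simp: refl_on_def locrel_def intro!: exI[of _ 0])
  moreover have "sym (locrel x)"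
  proof (rule symI)
    fix p q assume "(p,q) \<in> locrel x"
    then obtain a m b n k where pq: "p = (a,m)" "q = (b,n)" "x^k*(x^n*a - x^m*b) = 0"
      by (cases p, cases q) (auto simp: locrel_def)
    have "x^k*(x^m*b - x^n*a) = - (x^k*(x^n*a - x^m*b))" by (simp add: algebra_simps)
    with pq show "(q,p) \<in> locrel x" by (auto simp: locrel_def)
  qed
  moreover have "trans (locrel x)"
  proof (rule transI)
    fix p q s assume "(p,q) \<in> locrel x" "(q,s) \<in> locrel x"
    then obtain a m b n c pp k l where pq: "p = (a,m)" "q = (b,n)" "s = (c,pp)"
      "x^k*(x^n*a - x^m*b) = 0" "x^l*(x^pp*b - x^n*c) = 0"
      by (cases p, cases q, cases s) (auto simp: locrel_def)
    have "x^(k+l+n)*(x^pp*a - x^m*c) = x^(l+pp) * (x^k*(x^n*a - x^m*b)) + x^(k+m) * (x^l*(x^pp*b - x^n*c))"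
      by (simp add: algebra_simps power_add)
    with pq show "(p,s) \<in> locrel x" by (auto simp: locrel_def)
  qed
  ultimately show ?thesis by (simp add: equiv_def)
qed

lemma loc_elem_eq: "loc_elem x a m = loc_elem x b n \<longleftrightarrow> ((a,m),(b,n)) \<in> locrel x"
  unfolding loc_elem_def using eq_equiv_class_iff[OF locrel_equiv] by blast

lemma loc_eqI: "x^n*a = x^m*b \<Longrightarrow> loc_elem x a m = loc_elem x b n"
  by (auto simp: loc_elem_eq locrel_def intro!: exI[of _ 0])

lemma loc_elem_in: "loc_elem x a m \<in> Loc x"
  unfolding loc_elem_def Loc_def by (rule quotientI) simp

lemma loc_mem: "(a',m') \<in> loc_elem x a m \<longleftrightarrow> ((a,m),(a',m')) \<in> locrel x"
  by (simp add: loc_elem_def)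

lemma loc_self: "(a,m) \<in> loc_elem x a m"
  by (simp add: loc_mem locrel_def exI[of _ 0])

lemma Loc_cases: "y \<in> Loc x \<Longrightarrow> \<exists>a m. y = loc_elem x a m"
  unfolding Loc_def loc_elem_def by (auto elim!: quotientE)

lemma loc_add_elem:
  "loc_add x (loc_elem x a m) (loc_elem x b n) = loc_elem x (x^n*a + x^m*b) (m+n)"
proof -
  have key: "loc_elem x (x^n'*a' + x^m'*b') (m'+n') = loc_elem x (x^n*a + x^m*b) (m+n)"
    if A: "(a',m') \<in> loc_elem x a m" and B: "(b',n') \<in> loc_elem x b n" for a' m' b' n'
  proof -
    obtain k where k: "x^k*(x^m'*a - x^m*a') = 0" using A by (auto simp: loc_mem locrel_iff)
    obtain l where l: "x^l*(x^n'*b - x^n*b') = 0" using B by (auto simp: loc_mem locrel_iff)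
    have "x^(k+l)*(x^(m+n)*(x^n'*a' + x^m'*b') - x^(m'+n')*(x^n*a + x^m*b))
        = - (x^l*x^(n+n')) * (x^k*(x^m'*a - x^m*a')) - (x^k*x^(m+m'))*(x^l*(x^n'*b - x^n*b'))"
      by (simp add: algebra_simps power_add)
    with k l show ?thesis by (auto simp: loc_elem_eq locrel_def)
  qed
  show ?thesis unfolding loc_add_def
    using key loc_self[of a m x] loc_self[of b n x] by blast
qed

lemma loc_smul_elem: "loc_smul x r (loc_elem x a m) = loc_elem x (r*a) m"
proof -
  have key: "loc_elem x (r*a') m' = loc_elem x (r*a) m" if A: "(a',m') \<in> loc_elem x a m" for a' m'
  proof -
    obtain k where k: "x^k*(x^m'*a - x^m*a') = 0" using A by (auto simp: loc_mem locrel_iff)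
    have "x^k*(x^m*(r*a') - x^m'*(r*a)) = - r * (x^k*(x^m'*a - x^m*a'))"
      by (simp add: algebra_simps)
    with k show ?thesis by (auto simp: loc_elem_eq locrel_def)
  qed
  show ?thesis unfolding loc_smul_def using key loc_self[of a m x] by blast
qed

definition Ssum :: "'a::comm_ring_1 \<Rightarrow> (nat \<Rightarrow> 'a) \<Rightarrow> nat \<Rightarrow> 'a" where
  "Ssum x g N = (\<Sum>i<N. g i * x^(N - Suc i))"

lemma Ssum_0[simp]: "Ssum x g 0 = 0" by (simp add: Ssum_def)

lemma Ssum_Suc: "Ssum x g (Suc N) = x * Ssum x g N + g N"
proof -
  have "Ssum x g (Suc N) = (\<Sum>i<N. g i * x^(N - i)) + g N"
    by (simp add: Ssum_def)
  also have "(\<Sum>i<N. g i * x^(N - i)) = x * Ssum x g N"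
    unfolding Ssum_def sum_distrib_left
  proof (rule sum.cong)
    fix i assume "i \<in> {..<N}"
    then have "N - i = Suc (N - Suc i)" by auto
    then show "g i * x^(N - i) = x * (g i * x^(N - Suc i))" by (simp add: algebra_simps)
  qed simp
  finally show ?thesis by simp
qed

lemma Ssum_ext: assumes "\<forall>i\<ge>n. g i = 0" shows "Ssum x g (n + d) = x^d * Ssum x g n"
  by (induction d) (use assms in \<open>simp_all add: Ssum_Suc\<close>)

lemma Ssum_linear: "Ssum x (\<lambda>i. r * g i + s * h i) N = r * Ssum x g N + s * Ssum x h N"
  by (simp add: Ssum_def sum.distrib sum_distrib_left algebra_simps)

lemma inv_polys_bound: assumes "g \<in> inv_polys" shows "\<exists>N. \<forall>i\<ge>N. g i = 0"
proof -
  have "finite {i. g i \<noteq> 0}" using assms by (simp add: inv_polys_def)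
  then obtain N where "\<forall>i\<in>{i. g i \<noteq> 0}. i < N" using finite_nat_set_iff_bounded by blast
  then show ?thesis by (metis leD mem_Collect_eq)
qed

lemma bound_inv_polys: "\<forall>i\<ge>N. g i = 0 \<Longrightarrow> g \<in> inv_polys"
  unfolding inv_polys_def mem_Collect_eq
  by (rule finite_subset[of _ "{..<N}"]) (auto simp: not_less[symmetric])

lemma inv_deg_vanish: assumes "g \<in> inv_polys" shows "\<forall>i\<ge>inv_deg g. g i = 0"
  using inv_polys_bound[OF assms] unfolding inv_deg_def by (rule LeastI_ex)

lemma inv_deg_le: "\<forall>i\<ge>N. g i = 0 \<Longrightarrow> inv_deg g \<le> N"
  unfolding inv_deg_def by (rule Least_le)

lemma f1_eq: assumes "\<forall>i\<ge>N. g i = 0" shows "f1_map x g = loc_elem x (Ssum x g N) N"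
proof -
  have g: "g \<in> inv_polys" using bound_inv_polys[OF assms] .
  define n where "n = inv_deg g"
  have le: "n \<le> N" using inv_deg_le[OF assms] by (simp add: n_def)
  have v: "\<forall>i\<ge>n. g i = 0" using inv_deg_vanish[OF g] by (simp add: n_def)
  obtain d where d: "N = n + d" using le le_Suc_ex by blast
  have "f1_map x g = loc_elem x (Ssum x g n) n"
    by (simp add: f1_map_def Ssum_def n_def Let_def)
  also have "\<dots> = loc_elem x (Ssum x g N) N"
    by (rule loc_eqI) (simp only: d Ssum_ext[OF v] power_add mult_ac)
  finally show ?thesis .
qed


lemma xU_vanish: "\<forall>i\<ge>N. g i = 0 \<Longrightarrow> \<forall>i\<ge>N. xU_mult x g i = 0"
  by (simp add: xU_mult_def U_act_def)

lemma Ssum_xU: "Ssum x (xU_mult x g) N = g 0 * x^N - g N"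
proof (induction N)
  case (Suc N)
  then show ?case
    by (simp add: Ssum_Suc xU_mult_def U_act_def right_diff_distrib mult.assoc mult.left_commute)
qed simp

lemma part1: "g \<in> inv_polys \<Longrightarrow> xU_mult x g \<in> inv_polys"
  using inv_polys_bound xU_vanish bound_inv_polys by metis

lemma part2: "g \<in> inv_polys \<Longrightarrow> f1_map x g \<in> Loc x"
  by (simp add: f1_map_def Let_def loc_elem_in)

lemma part3: assumes "g \<in> inv_polys" "h \<in> inv_polys"
  shows "f1_map x (\<lambda>i. r * g i + s * h i)
          = loc_add x (loc_smul x r (f1_map x g)) (loc_smul x s (f1_map x h))"
proof -
  obtain N1 where N1: "\<forall>i\<ge>N1. g i = 0" using inv_polys_bound[OF assms(1)] by blast
  obtain N2 where N2: "\<forall>i\<ge>N2. h i = 0" using inv_polys_bound[OF assms(2)] by blast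
  define N where "N = N1 + N2"
  have g: "\<forall>i\<ge>N. g i = 0" and h: "\<forall>i\<ge>N. h i = 0" using N1 N2 by (auto simp: N_def)
  have gh: "\<forall>i\<ge>N. r * g i + s * h i = 0" using g h by simp
  show ?thesis
    unfolding f1_eq[OF g] f1_eq[OF h] f1_eq[OF gh] loc_smul_elem loc_add_elem Ssum_linear
    by (rule loc_eqI) (simp add: power_add algebra_simps)
qed

lemma part4: assumes "g \<in> inv_polys" shows "f1_map x (xU_mult x g) = loc_iota x (f0_map g)"
proof -
  obtain N where N: "\<forall>i\<ge>N. g i = 0" using inv_polys_bound[OF assms] by blast
  show ?thesis unfolding f1_eq[OF xU_vanish[OF N]] Ssum_xU loc_iota_def f0_map_def
    using N by (intro loc_eqI) (simp add: algebra_simps)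
qed

lemma iota_zero: "loc_iota x r = loc_iota x 0 \<longleftrightarrow> (\<exists>k. x^k * r = 0)"
  by (simp add: loc_iota_def loc_elem_eq locrel_iff)

lemma ker_form: assumes "xU_mult x g = (\<lambda>_. 0)" shows "g i = x^i * g 0"
proof -
  have s: "g (Suc i) = x * g i" for i
    using fun_cong[OF assms, of i] by (simp add: xU_mult_def U_act_def)
  show ?thesis by (induction i) (simp_all add: s)
qed

lemma part5: "bij_betw f0_map {g\<in>inv_polys. xU_mult x g = (\<lambda>_. 0)} {r. loc_iota x r = loc_iota x 0}"
  unfolding bij_betw_def
proof
  show "inj_on f0_map {g\<in>inv_polys. xU_mult x g = (\<lambda>_. 0)}"
  proof (rule inj_onI)
    fix g h assume "g \<in> {g\<in>inv_polys. xU_mult x g = (\<lambda>_. 0)}" "h \<in> {g\<in>inv_polys. xU_mult x g = (\<lambda>_. 0)}"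
      "f0_map g = f0_map h"
    then have "g 0 = h 0" and kg: "xU_mult x g = (\<lambda>_. 0)" and kh: "xU_mult x h = (\<lambda>_. 0)"
      by (auto simp: f0_map_def)
    show "g = h"
    proof
      fix i show "g i = h i" using ker_form[OF kg, of i] ker_form[OF kh, of i] \<open>g 0 = h 0\<close> by metis
    qed
  qed
  show "f0_map ` {g\<in>inv_polys. xU_mult x g = (\<lambda>_. 0)} = {r. loc_iota x r = loc_iota x 0}"
  proof (intro equalityI subsetI)
    fix r assume "r \<in> f0_map ` {g\<in>inv_polys. xU_mult x g = (\<lambda>_. 0)}"
    then obtain g where g: "g \<in> inv_polys" "xU_mult x g = (\<lambda>_. 0)" "r = g 0"
      by (auto simp: f0_map_def)
    obtain N where "\<forall>i\<ge>N. g i = 0" using inv_polys_bound[OF g(1)] by blast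
    then have "x^N * r = 0" using ker_form[OF g(2), of N] g(3) by simp
    then show "r \<in> {r. loc_iota x r = loc_iota x 0}" by (auto simp: iota_zero)
  next
    fix r assume "r \<in> {r. loc_iota x r = loc_iota x 0}"
    then obtain k where k: "x^k * r = 0" by (auto simp: iota_zero)
    define g where "g = (\<lambda>i. x^i * r)"
    have "\<forall>i\<ge>k. g i = 0"
    proof (intro allI impI)
      fix i assume "k \<le> i"
      then obtain d where "i = k + d" using le_Suc_ex by blast
      then have "g i = x^d * (x^k * r)" by (simp add: g_def power_add mult_ac)
      then show "g i = 0" using k by simp
    qed
    then have "g \<in> inv_polys" by (rule bound_inv_polys)
    moreover have "xU_mult x g = (\<lambda>_. 0)" by (simp add: g_def xU_mult_def U_act_def fun_eq_iff)
    moreover have "f0_map g = r" by (simp add: g_def f0_map_def)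
    ultimately show "r \<in> f0_map ` {g\<in>inv_polys. xU_mult x g = (\<lambda>_. 0)}" by force
  qed
qed

lemma part6: assumes "y \<in> Loc x" shows "\<exists>g\<in>inv_polys. \<exists>r. y = loc_add x (f1_map x g) (loc_iota x r)"
proof -
  obtain a m where y: "y = loc_elem x a m" using Loc_cases[OF assms] by blast
  show ?thesis
  proof (cases m)
    case 0
    have z: "\<forall>i\<ge>0. (\<lambda>_. 0::'a) i = 0" by simp
    have "y = loc_add x (f1_map x (\<lambda>_. 0)) (loc_iota x a)"
      unfolding f1_eq[OF z] loc_iota_def loc_add_elem y 0 by (simp add: Ssum_def)
    then show ?thesis using bound_inv_polys[OF z] by blast
  next
    case (Suc m')
    define g where "g = (\<lambda>i. if i = m' then a else (0::'a))"
    have v: "\<forall>i\<ge>m. g i = 0" by (simp add: g_def Suc)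
    have "Ssum x g m' = 0" by (simp add: Ssum_def g_def)
    then have S: "Ssum x g m = a" by (simp add: Suc Ssum_Suc g_def)
    have "y = loc_add x (f1_map x g) (loc_iota x 0)"
      unfolding f1_eq[OF v] loc_iota_def loc_add_elem y S by simp
    then show ?thesis using bound_inv_polys[OF v] by blast
  qed
qed

lemma part7: assumes "g \<in> inv_polys" "f1_map x g = loc_iota x r"
  shows "\<exists>h\<in>inv_polys. g = xU_mult x h"
proof -
  define N where "N = inv_deg g"
  have v: "\<forall>i\<ge>N. g i = 0" using inv_deg_vanish[OF assms(1)] by (simp add: N_def)
  have "loc_elem x (Ssum x g N) N = loc_elem x r 0"
    using assms(2) f1_eq[OF v] by (simp add: loc_iota_def)
  then obtain k where k: "x^k * (Ssum x g N - x^N * r) = 0"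
    by (auto simp: loc_elem_eq locrel_iff)
  define h where "h = (\<lambda>i. x^i * r - Ssum x g i)"
  have "\<forall>i\<ge>N+k. h i = 0"
  proof (intro allI impI)
    fix i assume "N + k \<le> i"
    then obtain d where d: "i = N + (k + d)" using le_Suc_ex by (metis add.assoc)
    have "h i = - (x^d * (x^k * (Ssum x g N - x^N * r)))"
      unfolding h_def d Ssum_ext[OF v] by (simp add: power_add algebra_simps)
    then show "h i = 0" using k by simp
  qed
  then have "h \<in> inv_polys" by (rule bound_inv_polys)
  moreover have "g = xU_mult x h"
    by (simp add: fun_eq_iff h_def xU_mult_def U_act_def Ssum_Suc algebra_simps)
  ultimately show ?thesis by blast
qed

theorem lemma6p6:
  fixes x :: "'a::comm_ring_1"
  shows
    \<comment> \<open>both differentials / maps are well-defined R-linear maps between the right modules\<close>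
    "(\<forall>g\<in>inv_polys. xU_mult x g \<in> inv_polys)
   \<and> (\<forall>g\<in>inv_polys. f1_map x g \<in> Loc x)
   \<and> (\<forall>g\<in>inv_polys. \<forall>h\<in>inv_polys. \<forall>r s.
        f0_map (\<lambda>i. r * g i + s * h i) = r * f0_map g + s * f0_map h
      \<and> f1_map x (\<lambda>i. r * g i + s * h i)
          = loc_add x (loc_smul x r (f1_map x g)) (loc_smul x s (f1_map x h)))
   \<comment> \<open>commutativity of the square: f1 o (x - U) = iota_x o f0\<close>
   \<and> (\<forall>g\<in>inv_polys. f1_map x (xU_mult x g) = loc_iota x (f0_map g))
   \<comment> \<open>H^0: f0 restricts to a bijection ker(x - U) -> ker(iota_x)\<close>
   \<and> bij_betw f0_map {g\<in>inv_polys. xU_mult x g = (\<lambda>_. 0)} {r. loc_iota x r = loc_iota x 0}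
   \<comment> \<open>H^1: the induced map coker(x - U) -> coker(iota_x) is surjective ...\<close>
   \<and> (\<forall>y\<in>Loc x. \<exists>g\<in>inv_polys. \<exists>r. y = loc_add x (f1_map x g) (loc_iota x r))
   \<comment> \<open>... and injective\<close>
   \<and> (\<forall>g\<in>inv_polys. (\<exists>r. f1_map x g = loc_iota x r) \<longrightarrow> (\<exists>h\<in>inv_polys. g = xU_mult x h))"
  apply (intro conjI ballI allI impI)
  using part1 apply blast
  using part2 apply blast
  apply (simp add: f0_map_def)
  using part3 apply blast
  using part4 apply blast
  using part5 apply blast
  using part6 apply blast
  using part7 apply blast
  done

end
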